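(* Let $\mathcal{T}$ be a set of monomials in $[n]$, and let $D^\star$ be the Hasse diagram of $\mathcal{M}^\star$ and $G^\star$ its underlying undirected graph. If $G^\star$ contains a cycle, then one of the following holds: (A) there exist $m_1,m_2,m_3\in\mathcal{T}$ with $m_1\cap m_2\cap m_3\neq\emptyset$ such that $m_3\cap(m_1\cup m_2)$ is a proper superset of both $m_3\cap m_1$ and $m_3\cap m_2$; (B) there exist pairwise different $m_1,\dots,m_k\in\mathcal{T}$, $k\ge3$, such that for all $i,j\in[k]$, $m_i\cap m_j\neq\emptyset$ if and only if $i$ and $j$ differ by at most $1$ modulo $k$.
   Context: A monomial is a nonempty subset of $[n]=\{1,\dots,n\}$; $\mathcal{S}=\{\{i\}:i\in[n]\}$. Define $\mathcal{M}'=\{\bigcap_{m\in I}m: I\subseteq\mathcal{T}, I\neq\emptyset, \bigcap_{m\in I}m\neq\emptyset\}$ and $\mathcal{M}^\star=\mathcal{M}'\cup\mathcal{S}$. The digraph $D^\star$ has node set $\mathcal{M}^\star$ and an arc $(m_1,m_2)$ for $m_1,m_2\in\mathcal{M}^\star$ if and only if $m_2\subsetneq m_1$ and there is no $m_3\in\mathcal{M}^\star$ with $m_2\subsetneq m_3\subsetneq m_1$. *)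

theory Defs
  imports Main
begin

definition monomial :: "nat \<Rightarrow> nat set \<Rightarrow> bool" where
  "monomial n m \<longleftrightarrow> m \<noteq> {} \<and> m \<subseteq> {1..n}"

definition singletons :: "nat \<Rightarrow> nat set set" where
  "singletons n = {{i} | i. i \<in> {1..n}}"

definition Mprime :: "nat set set \<Rightarrow> nat set set" where
  "Mprime T = {\<Inter> I | I. I \<subseteq> T \<and> I \<noteq> {} \<and> \<Inter> I \<noteq> {}}"

definition Mstar :: "nat \<Rightarrow> nat set set \<Rightarrow> nat set set" where
  "Mstar n T = Mprime T \<union> singletons n"

definition hasse_arc :: "nat \<Rightarrow> nat set set \<Rightarrow> nat set \<Rightarrow> nat set \<Rightarrow> bool" where
  "hasse_arc n T m1 m2 \<longleftrightarrow> m1 \<in> Mstar n T \<and> m2 \<in> Mstar n T \<and> m2 \<subset> m1 \<and>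
     \<not> (\<exists>m3 \<in> Mstar n T. m2 \<subset> m3 \<and> m3 \<subset> m1)"

definition Gstar_adj :: "nat \<Rightarrow> nat set set \<Rightarrow> nat set \<Rightarrow> nat set \<Rightarrow> bool" where
  "Gstar_adj n T a b \<longleftrightarrow> hasse_arc n T a b \<or> hasse_arc n T b a"

definition Gstar_has_cycle :: "nat \<Rightarrow> nat set set \<Rightarrow> bool" where
  "Gstar_has_cycle n T \<longleftrightarrow> (\<exists>k (c :: nat \<Rightarrow> nat set). k \<ge> 3 \<and> inj_on c {0..<k} \<and>
     (\<forall>i<k. c i \<in> Mstar n T) \<and> (\<forall>i<k. Gstar_adj n T (c i) (c ((i + 1) mod k))))"

end

theory Submission
  imports Defs
begin

definition icyc :: "nat set set \<Rightarrow> nat \<Rightarrow> (nat \<Rightarrow> nat set) \<Rightarrow> bool" where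
  "icyc T k m \<longleftrightarrow> k \<ge> 3 \<and> inj_on m {0..<k} \<and> (\<forall>i<k. m i \<in> T) \<and>
     (\<forall>i<k. m i \<inter> m ((i + 1) mod k) \<noteq> {})"

lemma chord_short:
  assumes c: "icyc T k c" and ij: "i < j" "j < k" and ch: "c i \<inter> c j \<noteq> {}"
    and nj: "j \<noteq> i + 1" and n0: "\<not> (i = 0 \<and> j = k - 1)"
  shows "icyc T (j - i + 1) (\<lambda>t. c (i + t))" and "j - i + 1 < k"
proof -
  let ?l = "j - i + 1"
  have l3: "?l \<ge> 3" using ij nj by simp
  show lk: "?l < k" using ij n0 by auto
  have inj: "inj_on c {0..<k}" using c unfolding icyc_def by blast
  have "inj_on (\<lambda>t. c (i + t)) {0..<?l}"
    unfolding inj_on_def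
  proof (intro ballI impI)
    fix x y assume "x \<in> {0..<?l}" "y \<in> {0..<?l}" "c (i + x) = c (i + y)"
    moreover have "i + x \<in> {0..<k}" "i + y \<in> {0..<k}" using \<open>x \<in> {0..<?l}\<close> \<open>y \<in> {0..<?l}\<close> ij by auto
    ultimately have "i + x = i + y" using inj unfolding inj_on_def by blast
    then show "x = y" by simp
  qed
  moreover have "\<forall>t<?l. c (i + t) \<in> T" using c ij unfolding icyc_def by auto
  moreover have "\<forall>t<?l. c (i + t) \<inter> c (i + (t + 1) mod ?l) \<noteq> {}"
  proof (intro allI impI)
    fix t assume t: "t < ?l"
    show "c (i + t) \<inter> c (i + (t + 1) mod ?l) \<noteq> {}"
    proof (cases "t + 1 < ?l")
      case True
      then have "(t + 1) mod ?l = t + 1" by simp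
      moreover have "(i + t + 1) mod k = i + t + 1" using True ij by simp
      moreover have "c (i + t) \<inter> c ((i + t + 1) mod k) \<noteq> {}"
      proof -
        have "i + t < k" using True ij by simp
        then show ?thesis using c unfolding icyc_def by (metis add.assoc)
      qed
      ultimately show ?thesis by simp
    next
      case False
      then have "t + 1 = ?l" using t by simp
      then have "(t + 1) mod ?l = 0" "i + t = j" using ij by auto
      then show ?thesis using ch by (simp add: Int_commute)
    qed
  qed
  ultimately show "icyc T ?l (\<lambda>t. c (i + t))" using l3 unfolding icyc_def by blast
qed

lemma shortest_induced:
  assumes c0: "icyc T k0 c0" and ne: "\<forall>x\<in>T. x \<noteq> {}"
  shows "\<exists>k (m :: nat \<Rightarrow> nat set). k \<ge> 3 \<and> inj_on m {0..<k} \<and> (\<forall>i<k. m i \<in> T) \<and>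
            (\<forall>i<k. \<forall>j<k. m i \<inter> m j \<noteq> {} \<longleftrightarrow>
                (j = i \<or> j = (i + 1) mod k \<or> i = (j + 1) mod k))"
proof -
  define k where "k = (LEAST k. \<exists>c. icyc T k c)"
  have "\<exists>c. icyc T k c" unfolding k_def by (rule LeastI[of _ k0]) (use c0 in blast)
  then obtain c where c: "icyc T k c" by blast
  have min: "\<And>l d. icyc T l d \<Longrightarrow> k \<le> l" unfolding k_def by (rule Least_le) blast
  have nochord: "False" if ij: "i < j" "j < k" and ch: "c i \<inter> c j \<noteq> {}"
    and nj: "j \<noteq> i + 1" and n0: "\<not> (i = 0 \<and> j = k - 1)" for i j
    using chord_short[OF c ij ch nj n0] min by fastforce
  have k3: "k \<ge> 3" using c unfolding icyc_def by blast
  have iff: "c i \<inter> c j \<noteq> {} \<longleftrightarrow> (j = i \<or> j = (i + 1) mod k \<or> i = (j + 1) mod k)"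
    if "i < k" "j < k" for i j
  proof
    assume ch: "c i \<inter> c j \<noteq> {}"
    show "j = i \<or> j = (i + 1) mod k \<or> i = (j + 1) mod k"
    proof (cases i j rule: linorder_cases)
      case less
      show ?thesis
      proof (rule ccontr)
        assume H: "\<not> ?thesis"
        have "j \<noteq> i + 1" using H less that by auto
        moreover have "\<not> (i = 0 \<and> j = k - 1)" using H that k3 by auto
        ultimately show False using nochord[OF less \<open>j < k\<close> ch] by blast
      qed
    next
      case greater
      show ?thesis
      proof (rule ccontr)
        assume H: "\<not> ?thesis"
        have "i \<noteq> j + 1" using H greater that by auto
        moreover have "\<not> (j = 0 \<and> i = k - 1)" using H that k3 by auto
        ultimately show False using nochord[OF greater \<open>i < k\<close>] ch by (auto simp: Int_commute)
      qed
    qed simp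
  next
    assume "j = i \<or> j = (i + 1) mod k \<or> i = (j + 1) mod k"
    then show "c i \<inter> c j \<noteq> {}"
    proof (elim disjE)
      assume "j = i" then show ?thesis using c ne that unfolding icyc_def by auto
    next
      assume "j = (i + 1) mod k" then show ?thesis using c that unfolding icyc_def by auto
    next
      assume "i = (j + 1) mod k" then show ?thesis using c that unfolding icyc_def by (auto simp: Int_commute)
    qed
  qed
  show ?thesis using c iff unfolding icyc_def by blast
qed

definition Sx :: "nat set set \<Rightarrow> nat set \<Rightarrow> nat set set" where
  "Sx T v = {m \<in> T. v \<subseteq> m}"

lemma Mprime_eq: "v \<in> Mprime T \<Longrightarrow> v = \<Inter>(Sx T v) \<and> Sx T v \<noteq> {} \<and> v \<noteq> {}"
proof -
  assume "v \<in> Mprime T"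
  then obtain I where I: "I \<subseteq> T" "I \<noteq> {}" "v = \<Inter>I" "\<Inter>I \<noteq> {}" unfolding Mprime_def by blast
  have "I \<subseteq> Sx T v" using I unfolding Sx_def by auto
  then have "\<Inter>(Sx T v) \<subseteq> v" using I by auto
  moreover have "v \<subseteq> \<Inter>(Sx T v)" unfolding Sx_def by auto
  ultimately show ?thesis using I \<open>I \<subseteq> Sx T v\<close> by auto
qed

lemma inter_in_Mprime: "S \<subseteq> T \<Longrightarrow> S \<noteq> {} \<Longrightarrow> \<Inter>S \<noteq> {} \<Longrightarrow> \<Inter>S \<in> Mprime T"
  unfolding Mprime_def by blast

lemma Mstar_ne: "v \<in> Mstar n T \<Longrightarrow> v \<noteq> {}"
  unfolding Mstar_def singletons_def using Mprime_eq by blast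

lemma Mstar_cases: "v \<in> Mstar n T \<Longrightarrow> v \<notin> Mprime T \<Longrightarrow> \<exists>x. v = {x}"
  unfolding Mstar_def singletons_def by blast

lemma single_up:
  assumes a: "hasse_arc n T a {x}" and nx: "{x} \<notin> Mprime T"
  shows "a = \<Inter>(Sx T {x})"
proof -
  have aM: "a \<in> Mstar n T" and sub: "{x} \<subset> a" and cov: "\<not> (\<exists>m3 \<in> Mstar n T. {x} \<subset> m3 \<and> m3 \<subset> a)"
    using a unfolding hasse_arc_def by auto
  have "\<not> (\<exists>y. a = {y})" using sub by auto
  then have aP: "a \<in> Mprime T" using Mstar_cases[OF aM] by blast
  from Mprime_eq[OF aP] have ae: "a = \<Inter>(Sx T a)" "Sx T a \<noteq> {}" by auto
  have ss: "Sx T a \<subseteq> Sx T {x}" using sub unfolding Sx_def by auto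
  define z where "z = \<Inter>(Sx T {x})"
  have xz: "x \<in> z" unfolding z_def Sx_def by auto
  have zP: "z \<in> Mprime T" unfolding z_def
    by (rule inter_in_Mprime) (use ss ae xz z_def in \<open>auto simp: Sx_def\<close>)
  have za: "z \<subseteq> a" using ss ae unfolding z_def by blast
  have "{x} \<noteq> z" using zP nx by auto
  then have "{x} \<subset> z" using xz by auto
  moreover have "z \<in> Mstar n T" using zP unfolding Mstar_def by auto
  ultimately have "z = a" using cov za by blast
  then show ?thesis unfolding z_def by simp
qed

definition NT :: "nat set set \<Rightarrow> bool" where
  "NT T \<longleftrightarrow> (\<forall>a\<in>T. \<forall>b\<in>T. \<forall>c\<in>T. a \<noteq> b \<longrightarrow> b \<noteq> c \<longrightarrow> a \<noteq> c \<longrightarrow>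
      a \<inter> b \<noteq> {} \<longrightarrow> b \<inter> c \<noteq> {} \<longrightarrow> a \<inter> c \<noteq> {} \<longrightarrow> False)"

lemma card_Sx:
  assumes fin: "finite T" and nt: "NT T" and v: "v \<noteq> {}"
  shows "card (Sx T v) \<le> 2"
proof (rule ccontr)
  assume "\<not> ?thesis"
  then have "card (Sx T v) \<ge> 3" by simp
  then obtain a b c where abc: "a \<in> Sx T v" "b \<in> Sx T v" "c \<in> Sx T v" "a \<noteq> b" "b \<noteq> c" "a \<noteq> c"
    by (auto simp: numeral_3_eq_3 card_le_Suc_iff)
  then show False using nt v unfolding NT_def Sx_def by blast
qed

lemma two_set: "finite A \<Longrightarrow> card A \<le> 2 \<Longrightarrow> a \<in> A \<Longrightarrow> b \<in> A \<Longrightarrow> a \<noteq> b \<Longrightarrow> A = {a, b}"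
proof -
  assume h: "finite A" "card A \<le> 2" "a \<in> A" "b \<in> A" "a \<noteq> b"
  have s: "{a, b} \<subseteq> A" using h by auto
  have "card {a, b} = 2" using h by simp
  moreover have "card {a, b} \<le> card A" using card_mono[OF h(1) s] .
  ultimately have "card {a, b} = card A" using h by linarith
  then show ?thesis using card_subset_eq[OF h(1) s] by simp
qed

lemma arc_types:
  assumes fin: "finite T" and nt: "NT T" and ar: "hasse_arc n T a b"
    and aP: "a \<in> Mprime T" and bP: "b \<in> Mprime T"
  shows "card (Sx T a) = 1 \<and> card (Sx T b) = 2"
proof -
  have sub: "b \<subset> a" using ar unfolding hasse_arc_def by auto
  have ss: "Sx T a \<subseteq> Sx T b" using sub unfolding Sx_def by auto
  have "Sx T a \<noteq> Sx T b" using Mprime_eq[OF aP] Mprime_eq[OF bP] sub by force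
  then have "Sx T a \<subset> Sx T b" using ss by auto
  moreover have "finite (Sx T b)" using fin unfolding Sx_def by auto
  ultimately have lt: "card (Sx T a) < card (Sx T b)" by (rule psubset_card_mono[rotated])
  have "card (Sx T a) \<ge> 1" using Mprime_eq[OF aP] fin by (simp add: Sx_def Suc_le_eq card_gt_0_iff)
  moreover have "card (Sx T b) \<le> 2" using card_Sx[OF fin nt] Mprime_eq[OF bP] by blast
  ultimately show ?thesis using lt by linarith
qed

lemma type1_in_T:
  assumes "v \<in> Mprime T" "card (Sx T v) = 1"
  shows "v \<in> T"
proof -
  obtain m where m: "Sx T v = {m}" using assms(2) card_1_singletonE by blast
  then have "v = m" using Mprime_eq[OF assms(1)] by simp
  then show ?thesis using m unfolding Sx_def by auto
qed

lemma down_edge: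
  assumes fin: "finite T" and nt: "NT T" and adj: "Gstar_adj n T u w \<or> Gstar_adj n T w u"
    and uP: "u \<in> Mprime T" and wP: "w \<in> Mprime T" and cw: "card (Sx T w) = 2"
  shows "w \<subset> u"
proof -
  have "hasse_arc n T u w \<or> hasse_arc n T w u" using adj unfolding Gstar_adj_def by blast
  then show ?thesis
  proof
    assume "hasse_arc n T u w" then show ?thesis unfolding hasse_arc_def by blast
  next
    assume "hasse_arc n T w u"
    then have "card (Sx T w) = 1" using arc_types[OF fin nt _ wP uP] by blast
    then show ?thesis using cw by simp
  qed
qed

lemma main_cycle:
  assumes fin: "finite T" and nt: "NT T" and cyc: "Gstar_has_cycle n T"
  shows "\<exists>k c. icyc T k c"
proof -
  obtain k :: nat and c where k3: "k \<ge> 3" and inj: "inj_on c {0..<k}" and cM: "\<forall>i<k. c i \<in> Mstar n T"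
    and cA: "\<forall>i<k. Gstar_adj n T (c i) (c ((i + 1) mod k))"
    using cyc unfolding Gstar_has_cycle_def by blast
  define e where "e i = c (i mod k)" for i
  have kpos: "k > 0" using k3 by simp
  have E1: "e i \<in> Mstar n T" for i using cM kpos unfolding e_def by simp
  have E2: "Gstar_adj n T (e i) (e (Suc i))" for i
  proof -
    have "Gstar_adj n T (c (i mod k)) (c ((i mod k + 1) mod k))" using cA kpos by simp
    then show ?thesis unfolding e_def by (simp add: mod_Suc_eq)
  qed
  have E3: "i mod k = j mod k" if "e i = e j" for i j
    using inj that kpos unfolding e_def inj_on_def by simp
  have Ek: "e (i + k) = e i" for i unfolding e_def by simp
  have L4s: "e (Suc i) \<in> Mprime T" for i
  proof (rule ccontr)
    assume nP: "e (Suc i) \<notin> Mprime T"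
    then obtain x where x: "e (Suc i) = {x}" using Mstar_cases[OF E1] by blast
    have "hasse_arc n T (e i) {x} \<or> hasse_arc n T {x} (e i)" using E2[of i] x unfolding Gstar_adj_def by simp
    moreover have "\<not> hasse_arc n T {x} (e i)" using Mstar_ne[OF E1[of i]] unfolding hasse_arc_def by blast
    ultimately have "hasse_arc n T (e i) {x}" by blast
    then have a: "e i = \<Inter>(Sx T {x})" using single_up nP x by metis
    have "hasse_arc n T {x} (e (Suc (Suc i))) \<or> hasse_arc n T (e (Suc (Suc i))) {x}"
      using E2[of "Suc i"] x unfolding Gstar_adj_def by simp
    moreover have "\<not> hasse_arc n T {x} (e (Suc (Suc i)))" using Mstar_ne[OF E1[of "Suc (Suc i)"]] unfolding hasse_arc_def by blast
    ultimately have "hasse_arc n T (e (Suc (Suc i))) {x}" by blast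
    then have b: "e (Suc (Suc i)) = \<Inter>(Sx T {x})" using single_up nP x by metis
    have "(i + 2) mod k = i mod k" using E3[of "Suc (Suc i)" i] a b by simp
    then have "k dvd 2" using mod_eq_dvd_iff_nat[of i "i + 2" k] by simp
    then have "k \<le> 2" by (rule dvd_imp_le) simp
    then show False using k3 by simp
  qed
  have L4: "e i \<in> Mprime T" for i
  proof -
    have "e i = e (Suc (i + k - 1))" using Ek[of i] kpos by simp
    then show ?thesis using L4s by simp
  qed
  define ty where "ty i = card (Sx T (e i))" for i
  have T2: "(ty i = 1 \<and> ty (Suc i) = 2) \<or> (ty i = 2 \<and> ty (Suc i) = 1)" for i
    using E2[of i] arc_types[OF fin nt _ L4 L4] unfolding Gstar_adj_def ty_def by blast
  have T0: "ty 0 = 1 \<or> ty 0 = 2" using T2[of 0] by blast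
  have Tf: "ty i = (if even i then ty 0 else 3 - ty 0)" for i
  proof (induction i)
    case 0 then show ?case by simp
  next
    case (Suc i) then show ?case using T2[of i] T0 by auto
  qed
  have "ty k = ty 0" using Ek[of 0] unfolding ty_def by simp
  then have kev: "even k" using Tf[of k] T0 by (auto split: if_splits)
  define h where "h = k div 2"
  have kh: "k = 2 * h" using kev unfolding h_def by simp
  define p :: nat where "p = (if ty 0 = 1 then 0 else 1)"
  have p1: "p \<le> 1" unfolding p_def by simp
  have ty1: "ty (2 * j + p) = 1" for j using Tf[of "2 * j + p"] T0 unfolding p_def by auto
  have ty2: "ty (2 * j + p + 1) = 2" for j using Tf[of "2 * j + p + 1"] T0 unfolding p_def by auto
  have inT: "e (2 * j + p) \<in> T" for j using type1_in_T[OF L4] ty1[of j] unfolding ty_def by blast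
  have dn1: "e (2 * j + p + 1) \<subset> e (2 * j + p)" for j
    by (rule down_edge[OF fin nt _ L4 L4]) (use E2[of "2 * j + p"] ty2[of j] in \<open>auto simp: ty_def\<close>)
  have dn2: "e (2 * j + p + 1) \<subset> e (2 * (j + 1) + p)" for j
    by (rule down_edge[OF fin nt _ L4 L4]) (use E2[of "2 * j + p + 1"] ty2[of j] in \<open>auto simp: ty_def\<close>)
  define d where "d j = e (2 * j + p)" for j
  have h3: "h \<ge> 3"
  proof (rule ccontr)
    assume "\<not> h \<ge> 3"
    then have h2: "h = 2" using k3 kh by simp
    then have k4: "k = 4" using kh by simp
    let ?w1 = "e (p + 1)" and ?w2 = "e (p + 3)" and ?u0 = "e p" and ?u1 = "e (p + 2)"
    have a1: "?w1 \<subset> ?u0" "?w1 \<subset> ?u1" using dn1[of 0] dn2[of 0] by (simp_all add: add.commute)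
    have "e (p + 4) = ?u0" using Ek[of p] k4 by simp
    moreover have eqs: "2 * 1 + p + 1 = p + 3" "2 * 1 + p = p + 2" "2 * (1 + 1) + p = p + 4" by simp_all
    ultimately have a2: "?w2 \<subset> ?u1" "?w2 \<subset> ?u0" using dn1[of 1] dn2[of 1] by (simp_all add: numeral_eq_Suc)
    have u0T: "?u0 \<in> T" and u1T: "?u1 \<in> T" using inT[of 0] inT[of 1] by (simp_all add: add.commute)
    have u01: "?u0 \<noteq> ?u1"
    proof
      assume "?u0 = ?u1"
      then have "p mod 4 = (p + 2) mod 4" using E3 k4 by metis
      then show False using p1 by (cases p) auto
    qed
    have fS: "finite (Sx T w)" for w using fin unfolding Sx_def by simp
    have w1P: "?w1 \<in> Mprime T" and w2P: "?w2 \<in> Mprime T" using L4 by blast+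
    have "Sx T ?w1 = {?u0, ?u1}"
      by (rule two_set[OF fS card_Sx[OF fin nt]]) (use Mprime_eq[OF w1P] a1 u0T u1T u01 in \<open>auto simp: Sx_def\<close>)
    moreover have "Sx T ?w2 = {?u0, ?u1}"
      by (rule two_set[OF fS card_Sx[OF fin nt]]) (use Mprime_eq[OF w2P] a2 u0T u1T u01 in \<open>auto simp: Sx_def\<close>)
    ultimately have "?w1 = ?w2" using Mprime_eq[OF w1P] Mprime_eq[OF w2P] by metis
    then have "(p + 1) mod 4 = (p + 3) mod 4" using E3 k4 by metis
    then show False using p1 by (cases p) auto
  qed
  have dinj: "inj_on d {0..<h}"
    unfolding inj_on_def
  proof (intro ballI impI)
    fix x y assume xy: "x \<in> {0..<h}" "y \<in> {0..<h}" "d x = d y"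
    then have "(2 * x + p) mod k = (2 * y + p) mod k" using E3 unfolding d_def by blast
    moreover have "2 * x + p < k" "2 * y + p < k" using xy p1 kh by auto
    ultimately show "x = y" by simp
  qed
  have dT: "\<forall>j<h. d j \<in> T" using inT unfolding d_def by blast
  have dE: "\<forall>j<h. d j \<inter> d ((j + 1) mod h) \<noteq> {}"
  proof (intro allI impI)
    fix j assume "j < h"
    have "(2 * ((j + 1) mod h) + p) mod k = (2 * (j + 1) + p) mod k"
      unfolding kh by (metis mod_add_left_eq mult_mod_right)
    then have eq: "d ((j + 1) mod h) = e (2 * (j + 1) + p)" unfolding d_def e_def by (metis mod_mod_trivial)
    have "e (2 * j + p + 1) \<noteq> {}" using Mprime_eq[OF L4] by blast
    then show "d j \<inter> d ((j + 1) mod h) \<noteq> {}" using dn1[of j] dn2[of j] eq unfolding d_def by blast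
  qed
  show ?thesis using h3 dinj dT dE unfolding icyc_def by blast
qed

theorem corollary4p11:
  fixes n :: nat and T :: "nat set set"
  assumes "\<forall>m \<in> T. monomial n m"
    and "Gstar_has_cycle n T"
  shows "(\<exists>m1 \<in> T. \<exists>m2 \<in> T. \<exists>m3 \<in> T. m1 \<inter> m2 \<inter> m3 \<noteq> {} \<and>
            m3 \<inter> m1 \<subset> m3 \<inter> (m1 \<union> m2) \<and> m3 \<inter> m2 \<subset> m3 \<inter> (m1 \<union> m2))
       \<or> (\<exists>k (m :: nat \<Rightarrow> nat set). k \<ge> 3 \<and> inj_on m {0..<k} \<and> (\<forall>i<k. m i \<in> T) \<and>
            (\<forall>i<k. \<forall>j<k. m i \<inter> m j \<noteq> {} \<longleftrightarrow>
                (j = i \<or> j = (i + 1) mod k \<or> i = (j + 1) mod k)))"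
proof -
  have sub: "T \<subseteq> Pow {1..n}" using assms(1) unfolding monomial_def by auto
  have fin: "finite T" by (rule finite_subset[OF sub]) simp
  have ne: "\<forall>x\<in>T. x \<noteq> {}" using assms(1) unfolding monomial_def by auto
  have "\<exists>k c. icyc T k c"
  proof (cases "NT T")
    case True
    then show ?thesis using main_cycle[OF fin True assms(2)] by blast
  next
    case False
    then obtain a b c where abc: "a \<in> T" "b \<in> T" "c \<in> T" "a \<noteq> b" "b \<noteq> c" "a \<noteq> c"
      "a \<inter> b \<noteq> {}" "b \<inter> c \<noteq> {}" "a \<inter> c \<noteq> {}" unfolding NT_def by blast
    define m :: "nat \<Rightarrow> nat set" where "m i = (if i = 0 then a else if i = 1 then b else c)" for i
    have r3: "{0..<3::nat} = {0, 1, 2}" by auto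
    have "inj_on m {0..<3}" unfolding r3 using abc by (auto simp: m_def inj_on_def)
    moreover have "\<forall>i<3. m i \<in> T" using abc by (auto simp: m_def)
    moreover have "\<forall>i<3. m i \<inter> m ((i + 1) mod 3) \<noteq> {}"
    proof (intro allI impI)
      fix i :: nat assume "i < 3"
      then have "i = 0 \<or> i = 1 \<or> i = 2" by auto
      then show "m i \<inter> m ((i + 1) mod 3) \<noteq> {}"
      proof (elim disjE)
        assume "i = 0" then show ?thesis using abc by (simp add: m_def)
      next
        assume "i = 1" then show ?thesis using abc by (simp add: m_def)
      next
        assume "i = 2" then show ?thesis using abc by (simp add: m_def Int_commute)
      qed
    qed
    ultimately have "icyc T 3 m" unfolding icyc_def by simp
    then show ?thesis by blast
  qed
  then obtain k c where "icyc T k c" by blast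
  then show ?thesis by (intro disjI2 shortest_induced[OF _ ne])
qed

end
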